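(* Consider coins $i=1,\dots,N$, where coin $i$ comes up heads with probability $p_i$ and $p_1,\dots,p_N$ are drawn independently from $\mathrm{Beta}(\alpha,\beta)$. Each example $z=(z^{(1)},\dots,z^{(N)})\in\{0,1\}^N$ records the outcome of one flip of every coin, and the training set consists of $n$ independent such examples. A hypothesis is a vector $\theta\in(0,1)^N$ of estimated head probabilities, with loss \[ \ell(z,\theta)=-\sum_{i=1}^N\big[z^{(i)}\log\theta_i+(1-z^{(i)})\log(1-\theta_i)\big]. \] Then a Bayes-optimal regularizer is \[ \mathrm{LogitBeta}(\theta)=-\frac1n\sum_{i=1}^N\big[\alpha\log(\theta_i)+\beta\log(1-\theta_i)\big]. \]
   Context: The training loss is $\hat L(\theta)=\frac1n\sum_{j=1}^n\ell(z_j,\theta)$. For a training set $Z$, the conditional expected test loss is $\bar L(\theta,Z)=\mathbb{E}[\mathbb{E}_{z}[\ell(z,\theta)]\mid Z]$, where the inner expectation is over a fresh example given $p_1,\dots,p_N$ and the outer is over the posterior of $p_1,\dots,p_N$. A regularizer $R^*$ is Bayes-optimal if $\arg\min_{\theta}\{\hat L(\theta)+R^*(\theta)\}=\arg\min_{\theta}\{\bar L(\theta,Z)\}$. *)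

theory Defs
  imports "HOL-Probability.Probability"
begin

text \<open>Coins are indexed by i < N, examples by j < n.  An example is a function
  z :: nat => bool (z i = True means coin i came up heads); a training set is
  Z :: nat => nat => bool, with Z j the j-th example.\<close>

definition beta_density :: "real \<Rightarrow> real \<Rightarrow> real \<Rightarrow> real" where
  "beta_density a b x =
     (if 0 < x \<and> x < 1 then x powr (a - 1) * (1 - x) powr (b - 1) / Beta a b else 0)"

definition coin_prior :: "nat \<Rightarrow> real \<Rightarrow> real \<Rightarrow> (nat \<Rightarrow> real) measure" where
  "coin_prior N a b = PiM {..<N} (\<lambda>_. density lborel (\<lambda>x. ennreal (beta_density a b x)))"

definition example_prob :: "nat \<Rightarrow> (nat \<Rightarrow> real) \<Rightarrow> (nat \<Rightarrow> bool) \<Rightarrow> real" where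
  "example_prob N p z = (\<Prod>i<N. if z i then p i else 1 - p i)"

definition examples :: "nat \<Rightarrow> (nat \<Rightarrow> bool) set" where
  "examples N = PiE {..<N} (\<lambda>_. UNIV)"

definition loss :: "nat \<Rightarrow> (nat \<Rightarrow> bool) \<Rightarrow> (nat \<Rightarrow> real) \<Rightarrow> real" where
  "loss N z \<theta> = - (\<Sum>i<N. of_bool (z i) * ln (\<theta> i) + (1 - of_bool (z i)) * ln (1 - \<theta> i))"

definition train_loss :: "nat \<Rightarrow> nat \<Rightarrow> (nat \<Rightarrow> nat \<Rightarrow> bool) \<Rightarrow> (nat \<Rightarrow> real) \<Rightarrow> real" where
  "train_loss N n Z \<theta> = (\<Sum>j<n. loss N (Z j) \<theta>) / real n"

definition likelihood :: "nat \<Rightarrow> nat \<Rightarrow> (nat \<Rightarrow> nat \<Rightarrow> bool) \<Rightarrow> (nat \<Rightarrow> real) \<Rightarrow> real" where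
  "likelihood N n Z p = (\<Prod>j<n. example_prob N p (Z j))"

definition posterior_expectation ::
  "nat \<Rightarrow> nat \<Rightarrow> real \<Rightarrow> real \<Rightarrow> (nat \<Rightarrow> nat \<Rightarrow> bool) \<Rightarrow> ((nat \<Rightarrow> real) \<Rightarrow> real) \<Rightarrow> real" where
  "posterior_expectation N n a b Z g =
     (\<integral>p. g p * likelihood N n Z p \<partial>coin_prior N a b) / (\<integral>p. likelihood N n Z p \<partial>coin_prior N a b)"

definition expected_test_loss ::
  "nat \<Rightarrow> nat \<Rightarrow> real \<Rightarrow> real \<Rightarrow> (nat \<Rightarrow> nat \<Rightarrow> bool) \<Rightarrow> (nat \<Rightarrow> real) \<Rightarrow> real" where
  "expected_test_loss N n a b Z \<theta> =
     posterior_expectation N n a b Z (\<lambda>p. \<Sum>z\<in>examples N. example_prob N p z * loss N z \<theta>)"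

definition hypotheses :: "nat \<Rightarrow> (nat \<Rightarrow> real) set" where
  "hypotheses N = PiE {..<N} (\<lambda>_. {0<..<1})"

definition argmin_on :: "'a set \<Rightarrow> ('a \<Rightarrow> real) \<Rightarrow> 'a set" where
  "argmin_on S f = {x \<in> S. \<forall>y\<in>S. f x \<le> f y}"

definition bayes_optimal :: "nat \<Rightarrow> nat \<Rightarrow> real \<Rightarrow> real \<Rightarrow> ((nat \<Rightarrow> real) \<Rightarrow> real) \<Rightarrow> bool" where
  "bayes_optimal N n a b R \<longleftrightarrow>
     (\<forall>Z. argmin_on (hypotheses N) (\<lambda>\<theta>. train_loss N n Z \<theta> + R \<theta>)
          = argmin_on (hypotheses N) (expected_test_loss N n a b Z))"

definition logit_beta :: "nat \<Rightarrow> nat \<Rightarrow> real \<Rightarrow> real \<Rightarrow> (nat \<Rightarrow> real) \<Rightarrow> real" where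
  "logit_beta N n a b \<theta> = - (1 / real n) * (\<Sum>i<N. a * ln (\<theta> i) + b * ln (1 - \<theta> i))"

end

theory Submission
  imports Defs
begin

lemma Beta_pos: "a > 0 \<Longrightarrow> b > 0 \<Longrightarrow> Beta a b > (0::real)"
  unfolding Beta_def by (simp add: Gamma_real_pos)

lemma beta_fun_int:
  fixes a b :: real
  assumes "a > 0" "b > 0"
  shows "integrable lborel (\<lambda>x. if 0 < x \<and> x < 1 then x powr (a-1) * (1-x) powr (b-1) else 0)"
    "(\<integral>x. (if 0 < x \<and> x < 1 then x powr (a-1) * (1-x) powr (b-1) else 0) \<partial>lborel) = Beta a b"
proof -
  have eq: "(\<lambda>x::real. if 0 < x \<and> x < 1 then x powr (a-1) * (1-x) powr (b-1) else 0)
     = (\<lambda>x. indicator {0..1} x *\<^sub>R (x powr (a-1) * (1-x) powr (b-1)))"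
    by (auto simp: indicator_def fun_eq_iff)
  have si: "set_integrable lborel {0..1} (\<lambda>t::real. t powr (a - 1) * (1 - t) powr (b - 1))"
    by (rule integrable_Beta[OF assms])
  then show "integrable lborel (\<lambda>x. if 0 < x \<and> x < 1 then x powr (a-1) * (1-x) powr (b-1) else 0)"
    unfolding eq set_integrable_def .
  have "(LINT x : {0..1} | lborel. x powr (a-1) * (1-x) powr (b-1)) = integral {0..1} (\<lambda>t::real. t powr (a - 1) * (1 - t) powr (b - 1))"
    by (rule set_borel_integral_eq_integral(2)[OF si])
  also have "\<dots> = Beta a b" using has_integral_Beta_real[OF assms] by (simp add: integral_unique)
  finally show "(\<integral>x. (if 0 < x \<and> x < 1 then x powr (a-1) * (1-x) powr (b-1) else 0) \<partial>lborel) = Beta a b"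
    unfolding eq set_lebesgue_integral_def .
qed

lemma bd_meas[measurable]: "beta_density a b \<in> borel_measurable borel"
  unfolding beta_density_def by measurable

lemma coin_int:
  fixes a b :: real and m l :: nat
  assumes "a > 0" "b > 0"
  shows "integrable (density lborel (\<lambda>x. ennreal (beta_density a b x))) (\<lambda>x. x^m * (1-x)^l)"
    "(\<integral>x. x^m * (1-x)^l \<partial>density lborel (\<lambda>x. ennreal (beta_density a b x))) = Beta (a+m) (b+l) / Beta a b"
proof -
  have nn: "AE x in lborel. 0 \<le> beta_density a b x"
    using Beta_pos[OF assms] by (auto simp: beta_density_def)
  have eq: "(\<lambda>x. beta_density a b x *\<^sub>R (x^m * (1-x)^l)) =
     (\<lambda>x. (if 0 < x \<and> x < 1 then x powr ((a+m)-1) * (1-x) powr ((b+l)-1) else 0) / Beta a b)"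
  proof
    fix x :: real
    show "beta_density a b x *\<^sub>R (x^m * (1-x)^l) =
     (if 0 < x \<and> x < 1 then x powr ((a+m)-1) * (1-x) powr ((b+l)-1) else 0) / Beta a b"
    proof (cases "0 < x \<and> x < 1")
      case True
      have "x powr ((a+m)-1) = x powr (a-1) * x^m"
        using True by (simp add: powr_add[symmetric] powr_realpow[symmetric] algebra_simps)
      moreover have "(1-x) powr ((b+l)-1) = (1-x) powr (b-1) * (1-x)^l"
        using True by (simp add: powr_add[symmetric] powr_realpow[symmetric] algebra_simps)
      ultimately show ?thesis using True by (simp add: beta_density_def)
    qed (auto simp: beta_density_def)
  qed
  have am: "a + m > 0" "b + l > 0" using assms by auto
  have i: "integrable lborel (\<lambda>x. beta_density a b x *\<^sub>R (x^m * (1-x)^l))"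
    unfolding eq by (intro integrable_divide beta_fun_int(1)[OF am])
  then show "integrable (density lborel (\<lambda>x. ennreal (beta_density a b x))) (\<lambda>x. x^m * (1-x)^l)"
    by (subst integrable_density[OF _ _ nn]) (use i in auto)
  show "(\<integral>x. x^m * (1-x)^l \<partial>density lborel (\<lambda>x. ennreal (beta_density a b x))) = Beta (a+m) (b+l) / Beta a b"
    by (subst integral_density[OF _ _ nn]) (use eq beta_fun_int(2)[OF am] in auto)
qed

lemma bd_integrable:
  assumes "a > 0" "b > 0"
  shows "integrable lborel (beta_density a b)"
proof -
  have "beta_density a b = (\<lambda>x. (if 0 < x \<and> x < 1 then x powr (a-1) * (1-x) powr (b-1) else 0) / Beta a b)"
    by (auto simp: beta_density_def fun_eq_iff)
  then show ?thesis using beta_fun_int(1)[OF assms] by simp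
qed

lemma coin_finite:
  assumes "a > 0" "b > 0"
  shows "finite_measure (density lborel (\<lambda>x. ennreal (beta_density a b x)))"
proof (rule finite_measureI)
  have nn: "AE x in lborel. 0 \<le> beta_density a b x"
    using Beta_pos[OF assms] by (auto simp: beta_density_def)
  have "emeasure (density lborel (\<lambda>x. ennreal (beta_density a b x))) (space (density lborel (\<lambda>x. ennreal (beta_density a b x))))
     = (\<integral>\<^sup>+x. ennreal (beta_density a b x) \<partial>lborel)"
    by (simp add: emeasure_density)
  also have "\<dots> = ennreal (\<integral>x. beta_density a b x \<partial>lborel)"
    by (rule nn_integral_eq_integral[OF bd_integrable[OF assms] nn])
  finally show "emeasure (density lborel (\<lambda>x. ennreal (beta_density a b x))) (space (density lborel (\<lambda>x. ennreal (beta_density a b x)))) \<noteq> \<infinity>"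
    by simp
qed

lemma coin_psf:
  assumes "a > 0" "b > 0"
  shows "product_sigma_finite (\<lambda>_. density lborel (\<lambda>x. ennreal (beta_density a b x)))"
  using coin_finite[OF assms] by (simp add: product_sigma_finite_def finite_measure_def)

lemma example_sum:
  fixes p :: "nat \<Rightarrow> real" and h :: "bool \<Rightarrow> real"
  assumes "i < N"
  shows "(\<Sum>z\<in>examples N. example_prob N p z * h (z i)) = p i * h True + (1 - p i) * h False"
proof -
  define f where "f i' y = (if y then p i' else 1 - p i') * (if i' = i then h y else 1)" for i' y
  have "(\<Prod>i'<N. \<Sum>y\<in>UNIV. f i' y) = (\<Sum>g\<in>PiE {..<N} (\<lambda>_. UNIV). \<Prod>i'<N. f i' (g i'))"
    by (rule prod_sum_PiE) auto
  also have "\<dots> = (\<Sum>z\<in>examples N. example_prob N p z * h (z i))"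
  proof (unfold examples_def, rule sum.cong[OF refl])
    fix z :: "nat \<Rightarrow> bool"
    have "(\<Prod>i'<N. f i' (z i')) = (\<Prod>i'<N. (if z i' then p i' else 1 - p i') * (if i' = i then h (z i') else 1))"
      by (simp add: f_def)
    also have "\<dots> = example_prob N p z * (\<Prod>i'<N. (if i' = i then h (z i') else 1))"
      by (simp add: prod.distrib example_prob_def)
    also have "(\<Prod>i'<N. (if i' = i then h (z i') else 1)) = h (z i)"
      using assms by (simp add: prod.delta)
    finally show "(\<Prod>i'<N. f i' (z i')) = example_prob N p z * h (z i)" by simp
  qed
  finally have 1: "(\<Sum>z\<in>examples N. example_prob N p z * h (z i)) = (\<Prod>i'<N. \<Sum>y\<in>UNIV. f i' y)" ..
  have "(\<Prod>i'<N. \<Sum>y\<in>UNIV. f i' y) = (\<Prod>i'<N. (if i' = i then p i * h True + (1 - p i) * h False else 1))"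
    by (rule prod.cong) (auto simp: f_def UNIV_bool)
  also have "\<dots> = p i * h True + (1 - p i) * h False"
    using assms by (simp add: prod.delta)
  finally show ?thesis using 1 by simp
qed

lemma inner_sum:
  "(\<Sum>z\<in>examples N. example_prob N p z * loss N z \<theta>) =
     - (\<Sum>i<N. p i * ln (\<theta> i) + (1 - p i) * ln (1 - \<theta> i))"
proof -
  have "(\<Sum>z\<in>examples N. example_prob N p z * loss N z \<theta>) =
     - (\<Sum>i<N. \<Sum>z\<in>examples N. example_prob N p z * (\<lambda>y. of_bool y * ln (\<theta> i) + (1 - of_bool y) * ln (1 - \<theta> i)) (z i))"
    unfolding loss_def by (simp add: sum_distrib_left sum_negf sum.swap[of _ "examples N"])
  also have "\<dots> = - (\<Sum>i<N. p i * ln (\<theta> i) + (1 - p i) * ln (1 - \<theta> i))"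
    by (intro arg_cong[where f=uminus] sum.cong refl, subst example_sum) auto
  finally show ?thesis .
qed


definition heads :: "nat \<Rightarrow> (nat \<Rightarrow> nat \<Rightarrow> bool) \<Rightarrow> nat \<Rightarrow> nat" where
  "heads n Z i = card ({..<n} \<inter> {j. Z j i})"

lemma heads_le: "heads n Z i \<le> n"
  unfolding heads_def by (metis card_lessThan card_mono finite_lessThan inf_le1)

lemma heads_compl: "card ({..<n} \<inter> - {j. Z j i}) = n - heads n Z i"
proof -
  have "card ({..<n} \<inter> {j. Z j i}) + card ({..<n} \<inter> - {j. Z j i}) = card ({..<n} \<inter> {j. Z j i} \<union> {..<n} \<inter> - {j. Z j i})"
    by (rule card_Un_disjoint[symmetric]) auto
  also have "{..<n} \<inter> {j. Z j i} \<union> {..<n} \<inter> - {j. Z j i} = {..<n}" by auto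
  finally show ?thesis unfolding heads_def by simp
qed

lemma likelihood_eq:
  "likelihood N n Z p = (\<Prod>i<N. p i ^ heads n Z i * (1 - p i) ^ (n - heads n Z i))"
  unfolding likelihood_def example_prob_def
  apply (subst prod.swap)
  apply (rule prod.cong[OF refl])
  apply (subst prod.If_cases)
   apply (auto simp: heads_compl heads_def)
  done

lemma train_eq:
  "train_loss N n Z \<theta> = - (1 / real n) * (\<Sum>i<N. real (heads n Z i) * ln (\<theta> i) + (real n - real (heads n Z i)) * ln (1 - \<theta> i))"
proof -
  have "(\<Sum>j<n. loss N (Z j) \<theta>) = - (\<Sum>i<N. \<Sum>j<n. of_bool (Z j i) * ln (\<theta> i) + (1 - of_bool (Z j i)) * ln (1 - \<theta> i))"
    unfolding loss_def by (simp add: sum_negf sum.swap[of _ "{..<n}"])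
  also have "\<dots> = - (\<Sum>i<N. real (heads n Z i) * ln (\<theta> i) + (real n - real (heads n Z i)) * ln (1 - \<theta> i))"
    by (simp add: sum.distrib sum_distrib_right[symmetric] sum_subtractf heads_def)
  finally show ?thesis unfolding train_loss_def by simp
qed


lemma pos_not_nonpos_Int: "(x::real) > 0 \<Longrightarrow> x \<notin> \<int>\<^sub>\<le>\<^sub>0"
  by (auto elim!: nonpos_Ints_cases)

lemma post_integrals:
  fixes a b :: real
  assumes a: "a > 0" and b: "b > 0" and i: "i < N"
  shows "integrable (coin_prior N a b) (likelihood N n Z)"
    "integrable (coin_prior N a b) (\<lambda>p. p i * likelihood N n Z p)"
    "(\<integral>p. likelihood N n Z p \<partial>coin_prior N a b) > 0"
    "(\<integral>p. p i * likelihood N n Z p \<partial>coin_prior N a b) =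
       (a + real (heads n Z i)) / (a + b + real n) * (\<integral>p. likelihood N n Z p \<partial>coin_prior N a b)"
proof -
  define M where "M = density lborel (\<lambda>x. ennreal (beta_density a b x))"
  define k where "k = heads n Z"
  interpret product_sigma_finite "\<lambda>_::nat. M"
    unfolding M_def by (rule coin_psf[OF a b])
  define f where "f e i' = (\<lambda>x::real. x ^ (k i' + e i') * (1 - x) ^ (n - k i'))" for e :: "nat \<Rightarrow> nat" and i'
  define e0 where "e0 = (\<lambda>_::nat. 0::nat)"
  define e1 where "e1 = (\<lambda>i'::nat. if i' = i then 1 else 0::nat)"
  have fint: "integrable M (f e i')" for e i'
    unfolding M_def f_def by (rule coin_int(1)[OF a b])
  have fval: "integral\<^sup>L M (f e i') = Beta (a + real (k i' + e i')) (b + real (n - k i')) / Beta a b" for e i'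
    unfolding M_def f_def by (rule coin_int(2)[OF a b])
  have prior: "coin_prior N a b = Pi\<^sub>M {..<N} (\<lambda>_. M)"
    unfolding coin_prior_def M_def ..
  have L: "likelihood N n Z = (\<lambda>p. \<Prod>i'\<in>{..<N}. f e0 i' (p i'))"
    by (simp add: fun_eq_iff likelihood_eq f_def e0_def k_def)
  have PL: "(\<lambda>p. p i * likelihood N n Z p) = (\<lambda>p. \<Prod>i'\<in>{..<N}. f e1 i' (p i'))"
  proof
    fix p :: "nat \<Rightarrow> real"
    have "(\<Prod>i'\<in>{..<N}. f e1 i' (p i')) = f e1 i (p i) * (\<Prod>i'\<in>{..<N}-{i}. f e1 i' (p i'))"
      using i by (simp add: prod.remove)
    also have "(\<Prod>i'\<in>{..<N}-{i}. f e1 i' (p i')) = (\<Prod>i'\<in>{..<N}-{i}. f e0 i' (p i'))"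
      by (rule prod.cong) (auto simp: f_def e0_def e1_def)
    also have "f e1 i (p i) = p i * f e0 i (p i)"
      by (simp add: f_def e0_def e1_def)
    also have "(\<Prod>i'\<in>{..<N}. f e0 i' (p i')) = f e0 i (p i) * (\<Prod>i'\<in>{..<N}-{i}. f e0 i' (p i'))"
      using i by (simp add: prod.remove)
    ultimately show "p i * likelihood N n Z p = (\<Prod>i'\<in>{..<N}. f e1 i' (p i'))"
      by (simp add: L)
  qed
  show "integrable (coin_prior N a b) (likelihood N n Z)"
    unfolding prior L by (rule product_integrable_prod) (auto intro: fint)
  show "integrable (coin_prior N a b) (\<lambda>p. p i * likelihood N n Z p)"
    unfolding prior PL by (rule product_integrable_prod) (auto intro: fint)
  define g where "g e i' = Beta (a + real (k i' + e i')) (b + real (n - k i')) / Beta a b" for e i'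
  have IL: "(\<integral>p. likelihood N n Z p \<partial>coin_prior N a b) = (\<Prod>i'\<in>{..<N}. g e0 i')"
    unfolding prior L g_def by (subst product_integral_prod) (auto intro: fint simp: fval)
  have IPL: "(\<integral>p. p i * likelihood N n Z p \<partial>coin_prior N a b) = (\<Prod>i'\<in>{..<N}. g e1 i')"
    unfolding prior PL g_def by (subst product_integral_prod) (auto intro: fint simp: fval)
  have gpos: "g e i' > 0" for e i'
    unfolding g_def using a b by (intro divide_pos_pos Beta_pos) auto
  show "(\<integral>p. likelihood N n Z p \<partial>coin_prior N a b) > 0"
    unfolding IL by (intro prod_pos) (auto intro: gpos)
  have kn: "k i \<le> n" unfolding k_def by (rule heads_le)
  have "(a + real (k i) + b + real (n - k i)) * Beta (a + real (k i) + 1) (b + real (n - k i))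
      = (a + real (k i)) * Beta (a + real (k i)) (b + real (n - k i))"
    using Beta_plus1_left[OF pos_not_nonpos_Int, of "a + real (k i)" "b + real (n - k i)"] a
    by (simp add: algebra_simps)
  moreover have "a + real (k i) + b + real (n - k i) = a + b + real n" using kn by (simp add: of_nat_diff)
  ultimately have B1: "Beta (a + real (k i) + 1) (b + real (n - k i)) = (a + real (k i)) / (a + b + real n) * Beta (a + real (k i)) (b + real (n - k i))"
    using a b by (simp add: field_simps)
  have g1: "g e1 i = (a + real (k i)) / (a + b + real n) * g e0 i"
    unfolding g_def e1_def e0_def using B1 by (simp add: add_ac)
  have "(\<Prod>i'\<in>{..<N}. g e1 i') = g e1 i * (\<Prod>i'\<in>{..<N}-{i}. g e1 i')"
    using i by (simp add: prod.remove)
  also have "(\<Prod>i'\<in>{..<N}-{i}. g e1 i') = (\<Prod>i'\<in>{..<N}-{i}. g e0 i')"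
    by (rule prod.cong) (auto simp: g_def e0_def e1_def)
  also have "(\<Prod>i'\<in>{..<N}. g e0 i') = g e0 i * (\<Prod>i'\<in>{..<N}-{i}. g e0 i')"
    using i by (simp add: prod.remove)
  ultimately show "(\<integral>p. p i * likelihood N n Z p \<partial>coin_prior N a b) =
       (a + real (heads n Z i)) / (a + b + real n) * (\<integral>p. likelihood N n Z p \<partial>coin_prior N a b)"
    unfolding IL IPL g1 k_def by simp
qed


lemma etl_eq:
  fixes a b :: real
  assumes a: "a > 0" and b: "b > 0"
  shows "expected_test_loss N n a b Z \<theta> =
    - (\<Sum>i<N. (a + real (heads n Z i)) / (a + b + real n) * ln (\<theta> i)
             + (1 - (a + real (heads n Z i)) / (a + b + real n)) * ln (1 - \<theta> i))"
proof (cases "N = 0")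
  case True
  then show ?thesis by (simp add: expected_test_loss_def posterior_expectation_def loss_def)
next
  case False
  define P where "P = coin_prior N a b"
  define L where "L = likelihood N n Z"
  define D where "D = (\<integral>p. L p \<partial>P)"
  define m where "m i = (a + real (heads n Z i)) / (a + b + real n)" for i
  note pi = post_integrals[where N=N and n=n and Z=Z, OF a b, folded P_def L_def]
  have Dpos: "D > 0" unfolding D_def using pi(3)[where i=0] False by simp
  have eq: "(\<lambda>p. (\<Sum>z\<in>examples N. example_prob N p z * loss N z \<theta>) * L p) =
     (\<lambda>p. \<Sum>i<N. (ln (1 - \<theta> i) - ln (\<theta> i)) * (p i * L p) - ln (1 - \<theta> i) * L p)"
  proof
    fix p :: "nat \<Rightarrow> real"
    have "(\<Sum>z\<in>examples N. example_prob N p z * loss N z \<theta>) * L p =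
       (\<Sum>i<N. - (p i * ln (\<theta> i) + (1 - p i) * ln (1 - \<theta> i)) * L p)"
      unfolding inner_sum sum_distrib_right[symmetric] sum_negf by simp
    also have "\<dots> = (\<Sum>i<N. (ln (1 - \<theta> i) - ln (\<theta> i)) * (p i * L p) - ln (1 - \<theta> i) * L p)"
      by (rule sum.cong) (simp_all add: algebra_simps)
    finally show "(\<Sum>z\<in>examples N. example_prob N p z * loss N z \<theta>) * L p =
       (\<Sum>i<N. (ln (1 - \<theta> i) - ln (\<theta> i)) * (p i * L p) - ln (1 - \<theta> i) * L p)" .
  qed
  have "(\<integral>p. (\<Sum>z\<in>examples N. example_prob N p z * loss N z \<theta>) * L p \<partial>P) =
      (\<Sum>i<N. (ln (1 - \<theta> i) - ln (\<theta> i)) * (m i * D) - ln (1 - \<theta> i) * D)"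
  proof -
    have "(LINT p|P. (\<Sum>i<N. (ln (1 - \<theta> i) - ln (\<theta> i)) * (p i * L p) - ln (1 - \<theta> i) * L p))
       = (\<Sum>i<N. LINT p|P. (ln (1 - \<theta> i) - ln (\<theta> i)) * (p i * L p) - ln (1 - \<theta> i) * L p)"
    proof (rule Bochner_Integration.integral_sum)
      fix i assume "i \<in> {..<N}"
      then show "integrable P (\<lambda>p. (ln (1 - \<theta> i) - ln (\<theta> i)) * (p i * L p) - ln (1 - \<theta> i) * L p)"
        using pi(1,2)[of i] by (intro Bochner_Integration.integrable_diff integrable_mult_right) auto
    qed
    also have "\<dots> = (\<Sum>i<N. (ln (1 - \<theta> i) - ln (\<theta> i)) * (m i * D) - ln (1 - \<theta> i) * D)"
    proof (rule sum.cong[OF refl])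
      fix i assume "i \<in> {..<N}"
      then have i: "i < N" by simp
      have "(LINT p|P. (ln (1 - \<theta> i) - ln (\<theta> i)) * (p i * L p) - ln (1 - \<theta> i) * L p)
         = (ln (1 - \<theta> i) - ln (\<theta> i)) * (LINT p|P. p i * L p) - ln (1 - \<theta> i) * (LINT p|P. L p)"
        using pi(1,2)[OF i] by (subst Bochner_Integration.integral_diff) (auto intro: integrable_mult_right)
      also have "\<dots> = (ln (1 - \<theta> i) - ln (\<theta> i)) * (m i * D) - ln (1 - \<theta> i) * D"
        using pi(4)[OF i] by (simp add: m_def D_def)
      finally show "(LINT p|P. (ln (1 - \<theta> i) - ln (\<theta> i)) * (p i * L p) - ln (1 - \<theta> i) * L p)
         = (ln (1 - \<theta> i) - ln (\<theta> i)) * (m i * D) - ln (1 - \<theta> i) * D" .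
    qed
    finally show ?thesis by (simp only: eq)
  qed
  also have "\<dots> = D * (- (\<Sum>i<N. m i * ln (\<theta> i) + (1 - m i) * ln (1 - \<theta> i)))"
    by (simp add: sum_distrib_left sum_negf[symmetric] algebra_simps)
  finally show ?thesis
    unfolding expected_test_loss_def posterior_expectation_def
    using Dpos by (simp add: P_def L_def D_def m_def)
qed


lemma aux2: assumes "(s::real) = a + b + n" "s > 0" shows
  "1 / s * ((k * L1 + (n - k) * L2) + (a * L1 + b * L2)) = (a + k) / s * L1 + (1 - (a + k) / s) * L2"
proof -
  have "(a + k) / s * L1 + (1 - (a + k) / s) * L2 = ((a + k) * L1 + (s - (a + k)) * L2) / s"
    using assms(2) by (simp add: field_simps)
  also have "s - (a + k) = b + n - k" using assms(1) by simp
  finally have "(a + k) / s * L1 + (1 - (a + k) / s) * L2 = ((a + k) * L1 + (b + n - k) * L2) / s" .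
  then show ?thesis by (simp add: field_simps)
qed

lemma aux_field: "(m::real) \<noteq> 0 \<Longrightarrow> s > 0 \<Longrightarrow> m / s * (- (1 / m) * X + - (1 / m) * Y) = - (1 / s) * (X + Y)"
  by (simp add: field_simps)

lemma key_eq:
  fixes a b :: real
  assumes a: "a > 0" and b: "b > 0" and n: "n > 0"
  shows "expected_test_loss N n a b Z \<theta> =
     (real n / (a + b + real n)) * (train_loss N n Z \<theta> + logit_beta N n a b \<theta>)"
proof -
  define X where "X = (\<Sum>i<N. real (heads n Z i) * ln (\<theta> i) + (real n - real (heads n Z i)) * ln (1 - \<theta> i))"
  define Y where "Y = (\<Sum>i<N. a * ln (\<theta> i) + b * ln (1 - \<theta> i))"
  have pos: "a + b + real n > 0" using a b by simp
  have "(real n / (a + b + real n)) * (train_loss N n Z \<theta> + logit_beta N n a b \<theta>)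
      = (real n / (a + b + real n)) * (- (1 / real n) * X + - (1 / real n) * Y)"
    by (simp add: train_eq logit_beta_def X_def Y_def)
  also have "\<dots> = - (1 / (a + b + real n)) * (X + Y)"
    using n pos by (intro aux_field) auto
  also have "X + Y = (\<Sum>i<N. (real (heads n Z i) * ln (\<theta> i) + (real n - real (heads n Z i)) * ln (1 - \<theta> i)) + (a * ln (\<theta> i) + b * ln (1 - \<theta> i)))"
    unfolding X_def Y_def by (rule sum.distrib[symmetric])
  also have "- (1 / (a + b + real n)) * \<dots> = - (\<Sum>i<N. (a + real (heads n Z i)) / (a + b + real n) * ln (\<theta> i)
             + (1 - (a + real (heads n Z i)) / (a + b + real n)) * ln (1 - \<theta> i))"
    unfolding sum_distrib_left mult_minus_left sum_negf[symmetric]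
    apply (intro arg_cong[where f=uminus] sum.cong refl)
    using pos by (rule aux2[OF refl])
  finally show ?thesis using etl_eq[OF a b] by simp
qed

theorem corollary1:
  fixes N n :: nat and \<alpha> \<beta> :: real
  assumes "\<alpha> > 0" and "\<beta> > 0" and "n > 0"
  shows "bayes_optimal N n \<alpha> \<beta> (logit_beta N n \<alpha> \<beta>)"
  unfolding bayes_optimal_def
proof
  fix Z
  define c where "c = real n / (\<alpha> + \<beta> + real n)"
  have c: "c > 0" unfolding c_def using assms by simp
  have k: "expected_test_loss N n \<alpha> \<beta> Z \<theta> = c * (train_loss N n Z \<theta> + logit_beta N n \<alpha> \<beta> \<theta>)" for \<theta>
    unfolding c_def by (rule key_eq[OF assms])
  show "argmin_on (hypotheses N) (\<lambda>\<theta>. train_loss N n Z \<theta> + logit_beta N n \<alpha> \<beta> \<theta>) =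
        argmin_on (hypotheses N) (expected_test_loss N n \<alpha> \<beta> Z)"
    unfolding argmin_on_def k using c by simp
qed

end
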